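(* Let $n$ be a positive integer with $n\equiv0\pmod 4$, and $\epsilon,\Delta\in\mathbb R$. Consider $n$ parties on a ring (indices mod $n$); each even site $2i$ holds a vector $A^{(2i)}\in\{\pm1\}^4$ and each odd site $2i+1$ holds $B^{(2i+1)}\in\{\pm1\}^3$. Define $$J:=\sum_{i=0}^{n/2-1}\Big[(1+\epsilon)\,A^{(2i)T}S_\Delta B^{(2i+1)}+(1-\epsilon)\,B^{(2i+1)T}S_\Delta^{T}A^{(2i+2)}\Big].$$ Then the minimum of $J$ over all such assignments equals $-n\max\{1,|\epsilon|\}\,c(\Delta)$, where $c(\Delta)=4+2|\Delta|$ if $|\Delta|\le2$ and $c(\Delta)=4|\Delta|$ if $|\Delta|>2$.
   Context: $S_\Delta$ is the real $4\times3$ matrix with rows $(1,1,\Delta)$, $(1,-1,-\Delta)$, $(-1,1,-\Delta)$, $(-1,-1,\Delta)$. *)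

theory Defs
  imports "HOL-Analysis.Analysis"
begin

definition S_mat :: "real \<Rightarrow> nat \<Rightarrow> nat \<Rightarrow> real" where
  "S_mat D j l =
     (let r = (if j = 0 then (1,1,D) else if j = 1 then (1,-1,-D)
               else if j = 2 then (-1,1,-D) else (-1,-1,D))
      in if l = 0 then fst r else if l = 1 then fst (snd r) else snd (snd r))"

definition bilin :: "real \<Rightarrow> (nat \<Rightarrow> real) \<Rightarrow> (nat \<Rightarrow> real) \<Rightarrow> real" where
  "bilin D u v = (\<Sum>j<4. \<Sum>l<3. u j * S_mat D j l * v l)"

definition bilinT :: "real \<Rightarrow> (nat \<Rightarrow> real) \<Rightarrow> (nat \<Rightarrow> real) \<Rightarrow> real" where
  "bilinT D v u = (\<Sum>l<3. \<Sum>j<4. v l * S_mat D j l * u j)"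

(* A site k holds A k :: nat => real (coordinates 0..3), B site k holds B k (coords 0..2);
   sites taken mod n *)
definition J_val :: "nat \<Rightarrow> real \<Rightarrow> real \<Rightarrow> (nat \<Rightarrow> nat \<Rightarrow> real) \<Rightarrow> (nat \<Rightarrow> nat \<Rightarrow> real) \<Rightarrow> real" where
  "J_val n eps D A B = (\<Sum>i<n div 2.
      (1 + eps) * bilin D (A ((2*i) mod n)) (B ((2*i+1) mod n))
    + (1 - eps) * bilinT D (B ((2*i+1) mod n)) (A ((2*i+2) mod n)))"

definition valid_assign :: "nat \<Rightarrow> (nat \<Rightarrow> nat \<Rightarrow> real) \<Rightarrow> (nat \<Rightarrow> nat \<Rightarrow> real) \<Rightarrow> bool" where
  "valid_assign n A B \<longleftrightarrow>
     (\<forall>k<n. even k \<longrightarrow> (\<forall>j<4. A k j \<in> {1, -1})) \<and>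
     (\<forall>k<n. odd k \<longrightarrow> (\<forall>l<3. B k l \<in> {1, -1}))"

definition c_fun :: "real \<Rightarrow> real" where
  "c_fun D = (if \<bar>D\<bar> \<le> 2 then 4 + 2 * \<bar>D\<bar> else 4 * \<bar>D\<bar>)"

end

theory Submission imports Defs begin
lemma bilin_exp: "bilin D u v = u 0 * (v 0 + v 1 + D * v 2) + u 1 * (v 0 - v 1 - D * v 2) + u 2 * (- v 0 + v 1 - D * v 2) + u 3 * (- v 0 - v 1 + D * v 2)"
  unfolding bilin_def S_mat_def by (simp add: eval_nat_numeral algebra_simps)
lemma bilinT_eq: "bilinT D v u = bilin D u v"
  unfolding bilinT_def bilin_exp S_mat_def by (simp add: eval_nat_numeral algebra_simps)
lemma abs_bilin: assumes "\<forall>j<4. u j \<in> {1,-1}" "\<forall>l<3. v l \<in> {1,-1}" shows "\<bar>bilin D u v\<bar> \<le> c_fun D"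
proof -
  have u0: "u 0 \<in> {1,-1}" "u 1 \<in> {1,-1}" "u 2 \<in> {1,-1}" "u 3 \<in> {1,-1}" using assms(1) by simp_all
  have u: "\<bar>u 0\<bar> = 1" "\<bar>u 1\<bar> = 1" "\<bar>u 2\<bar> = 1" "\<bar>u 3\<bar> = 1" using u0 by auto
  have v: "v 0 = 1 \<or> v 0 = -1" "v 1 = 1 \<or> v 1 = -1" "v 2 = 1 \<or> v 2 = -1" using assms(2) by auto
  define t0 where "t0 = v 0 + v 1 + D * v 2"
  define t1 where "t1 = v 0 - v 1 - D * v 2"
  define t2 where "t2 = - v 0 + v 1 - D * v 2"
  define t3 where "t3 = - v 0 - v 1 + D * v 2"
  have "\<bar>bilin D u v\<bar> \<le> \<bar>u 0 * t0\<bar> + \<bar>u 1 * t1\<bar> + \<bar>u 2 * t2\<bar> + \<bar>u 3 * t3\<bar>"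
    unfolding bilin_exp t0_def t1_def t2_def t3_def by linarith
  also have "\<dots> = \<bar>t0\<bar> + \<bar>t1\<bar> + \<bar>t2\<bar> + \<bar>t3\<bar>" using u by (simp add: abs_mult)
  also have "\<dots> \<le> c_fun D" unfolding t0_def t1_def t2_def t3_def c_fun_def
    using v by (elim disjE) (simp_all add: abs_if)
  finally show ?thesis .
qed
definition astar :: "real \<Rightarrow> nat \<Rightarrow> real" where
 "astar D j = (if j = 0 then (if 2 + D \<ge> 0 then -1 else 1) else if j = 1 \<or> j = 2 then (if - D \<ge> 0 then -1 else 1) else (if D - 2 \<ge> 0 then -1 else 1))"
lemma astar_val: "bilin D (astar D) (\<lambda>_. 1) = - c_fun D"
  unfolding bilin_exp astar_def c_fun_def by (simp; arith)
lemma bilin_scale: "bilin D (\<lambda>j. s * u j) (\<lambda>l. t * v l) = s * t * bilin D u v"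
  unfolding bilin_exp by (simp add: algebra_simps)
lemma term_lb: fixes X Y c e :: real assumes "\<bar>X\<bar> \<le> c" "\<bar>Y\<bar> \<le> c"
  shows "(1 + e) * X + (1 - e) * Y \<ge> - (2 * max 1 \<bar>e\<bar> * c)"
proof -
  have h1: "\<bar>(1+e)*X\<bar> \<le> \<bar>1+e\<bar> * c" using assms by (metis abs_ge_zero abs_mult mult_left_mono)
  have h2: "\<bar>(1-e)*Y\<bar> \<le> \<bar>1-e\<bar> * c" using assms by (metis abs_ge_zero abs_mult mult_left_mono)
  have a1: "-(\<bar>1+e\<bar> * c) \<le> (1+e)*X" using h1 unfolding abs_le_iff by linarith
  have a2: "-(\<bar>1-e\<bar> * c) \<le> (1-e)*Y" using h2 unfolding abs_le_iff by linarith
  have eq: "\<bar>1+e\<bar> + \<bar>1-e\<bar> = 2 * max 1 \<bar>e\<bar>" by (auto simp: max_def abs_if)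
  have "2 * max 1 \<bar>e\<bar> * c = \<bar>1+e\<bar> * c + \<bar>1-e\<bar> * c" unfolding eq[symmetric] by (rule distrib_right)
  thus ?thesis using a1 a2 by linarith
qed

lemma pm_mult: "x \<in> {1,-1::real} \<Longrightarrow> y \<in> {1,-1} \<Longrightarrow> x*y \<in> {1,-1}" by auto
lemma pm_pow: "(-1::real)^m \<in> {1,-1}" by (cases "even m") auto
lemma astar_pm: "astar D j \<in> {1,-1}" unfolding astar_def by auto

lemma idx_lt: assumes "(n::nat) > 0" "even n" "i < n div 2"
  shows "(2*i) mod n = 2*i" "(2*i+1) mod n = 2*i+1"
  using assms by (auto elim!: evenE)

lemma idx_wrap: assumes "n mod 4 = 0" "i < n div 2"
  shows "(-1::real)^(((2*i+2) mod n) div 2) = - ((-1)^i)"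
proof (cases "2*i+2 < n")
  case True
  then show ?thesis by simp
next
  case False
  have e: "even n" using assms(1) by presburger
  hence "2*i+2 = n" using False assms(2) by (auto elim!: evenE)
  moreover have "odd i" using assms \<open>2*i+2 = n\<close> by presburger
  ultimately show ?thesis by simp
qed

lemma sum_part: assumes "n mod 4 = 0" "\<And>i. i < n div 2 \<Longrightarrow> f i \<ge> (k::real)"
  shows "(\<Sum>i<n div 2. f i) \<ge> real n / 2 * k"
proof -
  have "(\<Sum>i<n div 2. f i) \<ge> (\<Sum>i<n div 2. k)" using assms(2) by (intro sum_mono) auto
  moreover have "real (n div 2) = real n / 2" using assms(1) by (auto elim!: evenE simp: mod_eq_0_iff_dvd)
  ultimately show ?thesis by simp
qed

lemma sum_part_eq: assumes "n mod 4 = 0" "\<And>i. i < n div 2 \<Longrightarrow> f i = (k::real)"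
  shows "(\<Sum>i<n div 2. f i) = real n / 2 * k"
proof -
  have "(\<Sum>i<n div 2. f i) = (\<Sum>i<n div 2. k)" using assms(2) by (intro sum.cong) auto
  moreover have "real (n div 2) = real n / 2" using assms(1) by (auto elim!: evenE simp: mod_eq_0_iff_dvd)
  ultimately show ?thesis by simp
qed

lemma bilin_sc: "bilin D (\<lambda>j. s * astar D j) (\<lambda>l. t) = - (s*t*c_fun D)"
  using bilin_scale[of D s "astar D" t "\<lambda>_. 1"] astar_val[of D] by simp

theorem mainTheorem11:
  fixes n :: nat and eps D :: real
  assumes "n > 0" and "n mod 4 = 0"
  shows "(\<forall>A B. valid_assign n A B \<longrightarrow>
            J_val n eps D A B \<ge> - real n * max 1 \<bar>eps\<bar> * c_fun D) \<and>
         (\<exists>A B. valid_assign n A B \<and>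
            J_val n eps D A B = - real n * max 1 \<bar>eps\<bar> * c_fun D)"
proof
  have ev: "even n" using assms(2) by presburger
  let ?M = "max 1 \<bar>eps\<bar>"
  show "\<forall>A B. valid_assign n A B \<longrightarrow>
            J_val n eps D A B \<ge> - real n * ?M * c_fun D"
  proof (intro allI impI)
    fix A B assume va: "valid_assign n A B"
    have "J_val n eps D A B \<ge> real n / 2 * (- (2 * ?M * c_fun D))"
      unfolding J_val_def
    proof (rule sum_part[OF assms(2)])
      fix i assume i: "i < n div 2"
      have k1: "(2*i) mod n < n" "(2*i+1) mod n < n" "(2*i+2) mod n < n" using assms(1) by auto
      have k2: "even ((2*i) mod n)" "odd ((2*i+1) mod n)" "even ((2*i+2) mod n)"
        using ev by (simp_all add: dvd_mod_iff) 
      show "(1 + eps) * bilin D (A ((2*i) mod n)) (B ((2*i+1) mod n))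
          + (1 - eps) * bilinT D (B ((2*i+1) mod n)) (A ((2*i+2) mod n)) \<ge> - (2 * ?M * c_fun D)"
        unfolding bilinT_eq
        by (rule term_lb; rule abs_bilin) (use va k1 k2 in \<open>auto simp: valid_assign_def\<close>)
    qed
    thus "J_val n eps D A B \<ge> - real n * ?M * c_fun D" by simp
  qed
next
  have ev: "even n" using assms(2) by presburger
  let ?M = "max 1 \<bar>eps\<bar>"
  define sg :: "nat \<Rightarrow> real" where "sg k = (if \<bar>eps\<bar> > 1 then (-1)^(k div 2) else 1)" for k
  define tg :: "nat \<Rightarrow> real" where "tg k = (if eps < -1 then - ((-1)^(k div 2)) else if eps > 1 then (-1)^(k div 2) else 1)" for k
  define A where "A k j = sg k * astar D j" for k j
  define B where "B k (l::nat) = tg k" for k l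
  have vA: "\<forall>k j. A k j \<in> {1,-1}" unfolding A_def sg_def
    using pm_mult[OF pm_pow astar_pm] astar_pm by simp
  have vB: "\<forall>k l. B k l \<in> {1,-1}" unfolding B_def tg_def
    using pm_pow by (metis (no_types, lifting) insert_iff minus_minus singletonD)
  have va: "valid_assign n A B" unfolding valid_assign_def using vA vB by blast
  have "J_val n eps D A B = real n / 2 * (- (2 * ?M * c_fun D))"
    unfolding J_val_def
  proof (rule sum_part_eq[OF assms(2)])
    fix i assume i: "i < n div 2"
    have w: "(-1::real)^(((2*i+2) mod n) div 2) = - ((-1)^i)" by (rule idx_wrap[OF assms(2) i])
    have l: "(2*i) mod n = 2*i" "(2*i+1) mod n = 2*i+1" using idx_lt[OF assms(1) ev i] by auto
    have d: "(2*i+1) div 2 = i" "(2*i) div 2 = i" by auto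
    have sq: "((-1::real)^i) * (-1)^i = 1" by (simp flip: power_add)
    show "(1 + eps) * bilin D (A ((2*i) mod n)) (B ((2*i+1) mod n))
          + (1 - eps) * bilinT D (B ((2*i+1) mod n)) (A ((2*i+2) mod n)) = - (2 * ?M * c_fun D)"
      unfolding bilinT_eq A_def B_def bilin_sc l sg_def tg_def d w
      using sq by (auto simp: max_def algebra_simps)
  qed
  hence "J_val n eps D A B = - real n * ?M * c_fun D" by (simp add: algebra_simps)
  thus "\<exists>A B. valid_assign n A B \<and> J_val n eps D A B = - real n * ?M * c_fun D"
    using va by blast
qed

end
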